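(* For every $k \in \mathbb{N}$ we have $\mathrm{N}(k) = k + \lfloor \log_2(k + 1 + \lfloor \log_2(k+1) \rfloor) \rfloor$.
   Context: The function $\mathrm{N} : \mathbb{N} \to \mathbb{N}$, $\mathbb{N} = \{1,2,\dots\}$, is defined recursively by $\mathrm{N}(1) = 2$ and, for $k \ge 2$, $\mathrm{N}(k) = \max_{i \in \{2,\dots,k\}} \min(2i, \mathrm{N}(k-i+1) + i)$. *)

theory Defs
  imports Complex_Main
begin

text \<open>The value at 0 (outside the paper's domain) is fixed arbitrarily to 0.\<close>

function N :: "nat \<Rightarrow> nat" where
  "N k = (if k = 0 then 0 else if k = 1 then 2
          else Max ((\<lambda>i. min (2 * i) (N (k - i + 1) + i)) ` {2..k}))"
  by pat_completeness auto
termination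
  by (relation "measure id") auto

end

theory Submission
  imports Defs
begin

declare N.simps[simp del]

lemma N_rec: "k \<ge> 2 \<Longrightarrow> N k = Max ((\<lambda>i. min (2 * i) (N (k - i + 1) + i)) ` {2..k})"
  by (subst N.simps) simp

lemma N_one: "N 1 = 2"
  by (subst N.simps) simp

lemma pow_aux: "d \<le> e \<Longrightarrow> 2^d + (e-d) \<le> (2::nat)^e"
proof (induction e)
  case 0 then show ?case by simp
next
  case (Suc e)
  show ?case
  proof (cases "d = Suc e")
    case True then show ?thesis by simp
  next
    case False
    then have de: "d \<le> e" using Suc.prems by simp
    with Suc.IH have h: "2^d + (e-d) \<le> (2::nat)^e" by blast
    have o: "(1::nat) \<le> 2^e" by simp
    have "Suc e - d = (e - d) + 1" using de by simp
    have p: "(2::nat)^Suc e = 2*2^e" by simp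
    show ?thesis unfolding p using h o \<open>Suc e - d = (e - d) + 1\<close> by linarith
  qed
qed

lemma two_d: "2*d \<le> (2::nat)^d"
proof (induction d)
  case 0 then show ?case by simp
next
  case (Suc d)
  show ?case
  proof (cases "d = 0")
    case True then show ?thesis by simp
  next
    case False
    then have "1 \<le> d" by simp
    moreover have p: "(2::nat)^Suc d = 2*2^d" by simp
    ultimately show ?thesis using Suc by (simp only: p) arith
  qed
qed

definition P :: "nat \<Rightarrow> nat \<Rightarrow> bool" where
  "P k d \<longleftrightarrow> 2^d \<le> k+d \<and> k+d+1 < 2^(d+1)"

lemma mono2: "c \<le> e \<Longrightarrow> 2^e \<le> j+e \<Longrightarrow> (2::nat)^c \<le> j+c"
  using pow_aux[of c e] by linarith

lemma P_ge: "P j e \<Longrightarrow> 2^c \<le> j+c \<Longrightarrow> c \<le> e"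
proof (rule ccontr)
  assume a: "P j e" "2^c \<le> j+c" "\<not> c \<le> e"
  then have "2^(e+1) \<le> j+(e+1)" using mono2[of "e+1" c j] by simp
  with a(1) show False unfolding P_def by simp
qed

lemma P_le: "P j e \<Longrightarrow> \<not> 2^(c+1) \<le> j+(c+1) \<Longrightarrow> e \<le> c"
proof (rule ccontr)
  assume a: "P j e" "\<not> 2^(c+1) \<le> j+(c+1)" "\<not> e \<le> c"
  then have "2^(c+1) \<le> j+(c+1)" using mono2[of "c+1" e j] unfolding P_def by simp
  with a(2) show False by simp
qed

lemma P_ex: "k \<ge> 1 \<Longrightarrow> \<exists>d. P k d"
proof -
  define S where "S = {d. (2::nat)^d \<le> k+d}"
  have fin: "finite S"
  proof (rule finite_subset[of _ "{..k}"])
    show "S \<subseteq> {..k}"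
    proof
      fix x assume "x \<in> S"
      then have "2^x \<le> k+x" unfolding S_def by simp
      then show "x \<in> {..k}" using two_d[of x] by simp
    qed
  qed simp
  assume "k \<ge> 1"
  then have "0 \<in> S" unfolding S_def by simp
  define d where "d = Max S"
  have dS: "d \<in> S" unfolding d_def using fin \<open>0 \<in> S\<close> by (auto intro: Max_in)
  have "d+1 \<notin> S"
  proof
    assume "d+1 \<in> S"
    then have "d+1 \<le> d" using Max_ge[OF fin, of "d+1"] unfolding d_def by blast
    then show False by simp
  qed
  then have "P k d" using dS unfolding S_def P_def by auto
  then show ?thesis by blast
qed

lemma main: "k \<ge> 1 \<Longrightarrow> P k d \<Longrightarrow> N k = k + d"
proof (induction k arbitrary: d rule: less_induct)
  case (less k)
  show ?case
  proof (cases "k = 1")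
    case True
    then have "d = 1"
    proof -
      have "d \<le> 1" using less.prems(2) True P_le[of 1 d 1] by (simp add: P_def)
      moreover have "1 \<le> d" using less.prems(2) True P_ge[of 1 d 1] by (simp add: P_def)
      ultimately show ?thesis by simp
    qed
    then show ?thesis using True N_one by simp
  next
    case False
    then have k2: "k \<ge> 2" using less.prems by simp
    have Pk: "2^d \<le> k+d" "k+d+1 < 2*2^d" using less.prems(2) unfolding P_def by auto
    have "d \<noteq> 0" using Pk k2 by (cases d) auto
    then obtain c where dc: "d = Suc c" by (cases d) auto
    have dk: "d \<le> k" using two_d[of d] Pk by linarith
    have IH: "\<And>j e. 1 \<le> j \<Longrightarrow> j < k \<Longrightarrow> P j e \<Longrightarrow> N j = j + e"
      using less.IH by blast
    let ?A = "(\<lambda>i. min (2 * i) (N (k - i + 1) + i)) ` {2..k}"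
    have ub: "\<forall>y\<in>?A. y \<le> k + d"
    proof
      fix y assume "y \<in> ?A"
      then obtain i where i: "i \<in> {2..k}" "y = min (2 * i) (N (k - i + 1) + i)" by auto
      define j where "j = k - i + 1"
      have j: "1 \<le> j" "j < k" "i + j = k + 1" using i unfolding j_def by auto
      obtain e where e: "P j e" using P_ex j(1) by blast
      have Nj: "N j = j + e" using IH[OF j(1,2) e] .
      show "y \<le> k + d"
      proof (cases "e < d")
        case True then show ?thesis using i Nj j unfolding j_def by simp
      next
        case False
        then have "2^d \<le> j+d" using mono2[of d e j] e unfolding P_def by simp
        then have "2*i \<le> k+d" using Pk j by linarith
        then show ?thesis using i by simp
      qed
    qed
    have mem: "k + d \<in> ?A"
    proof -
      have "k + d = 2*((k+d) div 2) \<or> k + d = 2*((k+d) div 2)+1" by presburger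
      then obtain m where m: "k + d = 2*m \<or> k + d = 2*m+1" by blast
      from m show ?thesis
      proof
        assume km: "k + d = 2*m"
        define j where "j = k + 1 - m"
        have mi: "m \<in> {2..k}" using km dk k2 dc by auto
        have j: "1 \<le> j" "j < k" "j = k - m + 1" using mi unfolding j_def by auto
        obtain e where e: "P j e" using P_ex j(1) by blast
        have "2^c \<le> j + c" using Pk km dc j mi by simp
        then have ce: "c \<le> e" using P_ge e by blast
        have Nj: "N j = j + e" using IH[OF j(1,2) e] .
        have "k + d = min (2*m) (N (k - m + 1) + m)"
          using Nj j ce km dc mi by simp
        then show ?thesis using mi by blast
      next
        assume km: "k + d = 2*m+1"
        define i where "i = m + 1"
        define j where "j = k - m"
        have mi: "i \<in> {2..k}" using km dk k2 dc unfolding i_def by auto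
        have j: "1 \<le> j" "j < k" "j = k - i + 1" using mi km unfolding j_def i_def by auto
        obtain e where e: "P j e" using P_ex j(1) by blast
        have "2*2^c \<le> 2*m+1" using Pk km dc by simp
        then have "2^c \<le> m" by linarith
        moreover have "j + c = m" using km dc dk unfolding j_def by arith
        ultimately have "2^c \<le> j + c" by simp
        then have ce: "c \<le> e" using P_ge e by blast
        have "\<not> 2^(c+1) \<le> j+(c+1)"
        proof
          assume "2^(c+1) \<le> j+(c+1)"
          then have "2*2^d \<le> 2*j+2*d" using dc by simp
          then show False using Pk km j mi unfolding i_def j_def by linarith
        qed
        then have ec: "e \<le> c" using P_le e by blast
        have Nj: "N j = j + e" using IH[OF j(1,2) e] .
        have "k + d = min (2*i) (N (k - i + 1) + i)"
          using Nj j ce ec km dc mi unfolding i_def j_def by simp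
        then show ?thesis using mi by blast
      qed
    qed
    have "N k = Max ?A" using N_rec[OF k2] .
    also have "\<dots> = k + d" by (rule Max_eqI) (use ub mem in auto)
    finally show ?thesis .
  qed
qed

lemma log_part:
  assumes "k \<ge> 1" "P k d"
  shows "\<lfloor>log 2 (real k + 1 + real_of_int \<lfloor>log 2 (real k + 1)\<rfloor>)\<rfloor> = int d"
proof -
  have Pk: "2^d \<le> k+d" "k+d+1 < 2*2^d" using assms(2) unfolding P_def by auto
  have d1: "d \<ge> 1" using Pk assms(1) by (cases d) auto
  define a where "a = (if 2^d \<le> k+1 then d else d-1)"
  have fa: "\<lfloor>log 2 (real (k+1))\<rfloor> = int a"
  proof (cases "2^d \<le> k+1")
    case True
    then show ?thesis unfolding a_def
      using floor_log_nat_eq_powr_iff[of 2 "k+1" d] Pk by simp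
  next
    case False
    have "2*d \<le> 2^d" by (rule two_d)
    have "2^(d-1) \<le> k+1"
    proof -
      obtain c where dc: "d = Suc c" using d1 by (cases d) auto
      have "2*2^c \<le> k + Suc c" using Pk dc by simp
      then show ?thesis using two_d[of c] dc by simp
    qed
    moreover have "k+1 < 2^(d-1+1)" using False d1 by simp
    ultimately show ?thesis unfolding a_def
      using floor_log_nat_eq_powr_iff[of 2 "k+1" "d-1"] False by simp
  qed
  have rr: "real (k+1) = real k + 1" by simp
  have e1: "real k + 1 + real_of_int \<lfloor>log 2 (real k + 1)\<rfloor> = real (k+1+a)"
    unfolding fa[unfolded rr] by simp
  have "2^d \<le> k+1+a \<and> k+1+a < 2^(d+1)"
    unfolding a_def using Pk d1 by auto
  then show ?thesis unfolding e1
    using floor_log_nat_eq_powr_iff[of 2 "k+1+a" d] by simp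
qed

theorem theorem7p21:
  fixes k :: nat
  assumes "k \<ge> 1"
  shows "int (N k) = int k + \<lfloor>log 2 (real k + 1 + real_of_int \<lfloor>log 2 (real k + 1)\<rfloor>)\<rfloor>"
proof -
  obtain d where "P k d" using P_ex assms by blast
  then show ?thesis using main[OF assms] log_part[OF assms] by simp
qed

end
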